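(* Let $a_2,a_3$ be integers with $1<a_2<a_3$ and $A=\{1,a_2,a_3\}$. Then $h_2\le h_0$.
   Context: An integer $x$ has an $h$-representation if $x=c_3a_3+c_2a_2+c_1$ with integers $c_1,c_2,c_3\ge0$ and $c_1+c_2+c_3\le h$. $X(h)$ is one less than the smallest positive integer with no $h$-representation. $h_0$ is the smallest $h$ with $X(h)\ge a_3$; $h_1$ is the smallest $h$ such that $X(h'+1)=X(h')+a_3$ for all $h'\ge h$; $h_2$ is the smallest $h\ge h_1$ such that for all $h'\ge h$ and all integers $x$ with $X(h')<x<h'a_3$: $x$ has no $h'$-representation if and only if $x+a_3$ has no $(h'+1)$-representation. *)

theory Defs
  imports Main
begin

definition hrep :: "int \<Rightarrow> int \<Rightarrow> nat \<Rightarrow> int \<Rightarrow> bool" where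
  "hrep a2 a3 h x \<longleftrightarrow> (\<exists>c1 c2 c3 :: nat.
     x = int c3 * a3 + int c2 * a2 + int c1 \<and> c1 + c2 + c3 \<le> h)"

definition Xh :: "int \<Rightarrow> int \<Rightarrow> nat \<Rightarrow> int" where
  "Xh a2 a3 h = (LEAST n::int. n > 0 \<and> \<not> hrep a2 a3 h n) - 1"

definition h0 :: "int \<Rightarrow> int \<Rightarrow> nat" where
  "h0 a2 a3 = (LEAST h. Xh a2 a3 h \<ge> a3)"

definition P1 :: "int \<Rightarrow> int \<Rightarrow> nat \<Rightarrow> bool" where
  "P1 a2 a3 h \<longleftrightarrow> (\<forall>h'\<ge>h. Xh a2 a3 (h' + 1) = Xh a2 a3 h' + a3)"

definition h1 :: "int \<Rightarrow> int \<Rightarrow> nat" where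
  "h1 a2 a3 = (LEAST h. P1 a2 a3 h)"

definition P2 :: "int \<Rightarrow> int \<Rightarrow> nat \<Rightarrow> bool" where
  "P2 a2 a3 h \<longleftrightarrow> h \<ge> h1 a2 a3 \<and>
     (\<forall>h'\<ge>h. \<forall>x::int. Xh a2 a3 h' < x \<and> x < int h' * a3 \<longrightarrow>
        (\<not> hrep a2 a3 h' x \<longleftrightarrow> \<not> hrep a2 a3 (h' + 1) (x + a3)))"

definition h2 :: "int \<Rightarrow> int \<Rightarrow> nat" where
  "h2 a2 a3 = (LEAST h. P2 a2 a3 h)"

end

theory Submission
  imports Defs
begin

lemma hrep_intI:
  fixes a2 a3 c1 c2 c3 x :: int
  assumes "0 \<le> c1" "0 \<le> c2" "0 \<le> c3" "c1 + c2 + c3 \<le> int h"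
    "x = c3 * a3 + c2 * a2 + c1"
  shows "hrep a2 a3 h x"
  unfolding hrep_def
  apply (rule exI[of _ "nat c1"], rule exI[of _ "nat c2"], rule exI[of _ "nat c3"])
  using assms by auto

lemma hrep_E:
  assumes "hrep a2 a3 h x"
  obtains c1 c2 c3 :: int where "0 \<le> c1" "0 \<le> c2" "0 \<le> c3" "c1 + c2 + c3 \<le> int h"
    "x = c3 * a3 + c2 * a2 + c1"
proof -
  from assms obtain n1 n2 n3 :: nat where
    "x = int n3 * a3 + int n2 * a2 + int n1" "n1 + n2 + n3 \<le> h"
    unfolding hrep_def by blast
  then show ?thesis
    using that[of "int n1" "int n2" "int n3"] by simp
qed

lemma hrep_mono:
  assumes "hrep a2 a3 h x" "h \<le> h'"
  shows "hrep a2 a3 h' x"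
  using assms unfolding hrep_def by (metis le_trans)

lemma hrep_add_b:
  assumes "hrep a2 a3 h x"
  shows "hrep a2 a3 (Suc h) (x + a3)"
proof -
  obtain c1 c2 c3 :: int where c: "0 \<le> c1" "0 \<le> c2" "0 \<le> c3" "c1 + c2 + c3 \<le> int h"
    "x = c3 * a3 + c2 * a2 + c1" using hrep_E[OF assms] by blast
  show ?thesis
    by (rule hrep_intI[of c1 c2 "c3 + 1"]) (use c in \<open>auto simp: algebra_simps\<close>)
qed

lemma hrep_ones:
  fixes n :: int
  assumes "0 \<le> n" "n \<le> int h"
  shows "hrep a2 a3 h n"
  by (rule hrep_intI[of n 0 0]) (use assms in auto)

lemma phase:
  fixes a r :: int and K :: nat
  assumes a: "0 < a" and K: "1 \<le> K"
    and nz: "\<forall>k::nat. 1 \<le> k \<and> k \<le> K \<longrightarrow> (int k * r) mod a \<noteq> 0"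
  shows "\<exists>k1 k2::nat. 1 \<le> k1 \<and> k1 \<le> K \<and> 1 \<le> k2 \<and> k2 \<le> K \<and> K < k1 + k2 \<and>
    (a - (int k1 * r) mod a) * int k2 + ((int k2 * r) mod a) * int k1 = a"
  using K nz
proof (induction K rule: nat_induct_at_least)
  case base
  show ?case by (rule exI[of _ 1], rule exI[of _ 1]) (simp add: algebra_simps)
next
  case (Suc n)
  from Suc.prems have nzn: "\<forall>k::nat. 1 \<le> k \<and> k \<le> n \<longrightarrow> (int k * r) mod a \<noteq> 0" by auto
  from Suc.IH[OF nzn] obtain k1 k2 :: nat where
    kk: "1 \<le> k1" "k1 \<le> n" "1 \<le> k2" "k2 \<le> n" "n < k1 + k2"
    and det: "(a - (int k1 * r) mod a) * int k2 + ((int k2 * r) mod a) * int k1 = a" by blast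
  show ?case
  proof (cases "Suc n < k1 + k2")
    case True
    then show ?thesis using kk det by (intro exI[of _ k1] exI[of _ k2]) auto
  next
    case False
    then have sn: "Suc n = k1 + k2" using kk by auto
    define H where "H = (int k1 * r) mod a"
    define L where "L = (int k2 * r) mod a"
    have H0: "0 \<le> H" "H < a" using a by (auto simp: H_def)
    have L0: "0 \<le> L" "L < a" using a by (auto simp: L_def)
    have hs: "(int (Suc n) * r) mod a = (H + L) mod a"
      unfolding H_def L_def sn by (simp add: mod_add_eq distrib_right)
    have nz1: "(H + L) mod a \<noteq> 0" using Suc.prems hs by auto
    have det': "(a - H) * int k2 + L * int k1 = a" using det by (simp add: H_def L_def)
    show ?thesis
    proof (cases "H + L < a")
      case True
      then have "(H + L) mod a = H + L" using H0 L0 by simp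
      then have hs2: "(int (Suc n) * r) mod a = H + L" using hs by simp
      have "(a - (H + L)) * int k2 + L * int (Suc n) = a"
        using det' unfolding sn by (simp add: algebra_simps)
      then show ?thesis using kk sn hs2
        by (intro exI[of _ "Suc n"] exI[of _ k2]) (auto simp: L_def)
    next
      case False
      have ne: "H + L \<noteq> a" using nz1 by auto
      have "(H + L) mod a = H + L - a"
      proof -
        have "a \<le> H + L" "H + L - a < a" using False H0 L0 by auto
        have "(H + L) mod a = (H + L - a + a) mod a" by simp
        also have "\<dots> = (H + L - a) mod a" by (rule mod_add_self2)
        also have "\<dots> = H + L - a" using \<open>a \<le> H + L\<close> \<open>H + L - a < a\<close>
          by (intro mod_pos_pos_trivial) auto
        finally show ?thesis .
      qed
      then have hs2: "(int (Suc n) * r) mod a = H + L - a" using hs by simp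
      have "(a - H) * int (Suc n) + (H + L - a) * int k1 = a"
        using det' unfolding sn by (simp add: algebra_simps)
      then show ?thesis using kk sn hs2
        by (intro exI[of _ k1] exI[of _ "Suc n"]) (auto simp: H_def)
    qed
  qed
qed

lemma core_easy:
  fixes a b q r i z k hh :: int
  assumes a: "0 < a" and bq: "b = q * a + r" and r0: "0 \<le> r" and q1: "1 \<le> q"
    and z0: "0 \<le> z" and za: "z < a" and iz: "i + z \<le> hh + 1"
    and k1: "1 \<le> k" and kb: "k * b \<le> i * a + z" and kz: "(k * r) mod a \<le> z"
  shows "\<exists>c1 c2 c3. 0 \<le> c1 \<and> 0 \<le> c2 \<and> 0 \<le> c3 \<and> c1 + c2 + c3 \<le> hh \<and>
    i * a + z - b = c3 * b + c2 * a + c1"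
proof -
  define d where "d = (k * r) div a"
  define m where "m = (k * r) mod a"
  have dm: "d * a + m = k * r" unfolding d_def m_def by simp
  have m0: "0 \<le> m" using a by (simp add: m_def)
  have d0: "0 \<le> d" using a k1 r0 by (simp add: d_def pos_imp_zdiv_nonneg_iff)
  define c3 where "c3 = k - 1"
  define c2 where "c2 = i - k * q - d"
  define c1 where "c1 = z - m"
  have val: "c3 * b + c2 * a + c1 = i * a + z - b"
  proof -
    have "c3 * b + c2 * a + c1 - (i * a + z - b) = k * r - (d * a + m)"
      unfolding c3_def c2_def c1_def bq by (simp add: algebra_simps)
    then show ?thesis using dm by simp
  qed
  have val2: "i * a + z - k * b = c2 * a + c1"
    unfolding c2_def c1_def bq using dm by (simp add: algebra_simps)
  have c10: "0 \<le> c1" "c1 < a" using kz m0 za by (auto simp: c1_def m_def)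
  have c20: "0 \<le> c2"
  proof (rule ccontr)
    assume "\<not> 0 \<le> c2"
    then have "c2 \<le> -1" by simp
    then have "c2 * a \<le> -1 * a" using a by (intro mult_right_mono) auto
    then show False using val2 kb c10 by simp
  qed
  have kq: "k \<le> k * q" using k1 q1 by (simp add: mult_le_cancel_left1)
  have "c1 + c2 + c3 \<le> hh" unfolding c1_def c2_def c3_def using kq d0 m0 iz by linarith
  then show ?thesis using c10 c20 k1 val by (intro exI[of _ c1] exI[of _ c2] exI[of _ c3]) (auto simp: c3_def)
qed

lemma ms_bound:
  fixes k1 k2 ms mm r a :: int
  assumes k1: "1 \<le> k1" and k2: "1 \<le> k2" and e4: "ms * k2 = 1 + mm * k1"
    and ms1: "1 \<le> ms" and mm0: "0 \<le> mm"
    and k1one: "k1 = 1 \<Longrightarrow> ms = 1" and k2one: "k2 = 1 \<Longrightarrow> mm = 0"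
  shows "ms \<le> (k1 - 1) * mm + 1"
proof (cases "k1 = 1")
  case True then show ?thesis using k1one by simp
next
  case False
  then have k12: "2 \<le> k1" using k1 by simp
  show ?thesis
  proof (cases "mm = 0")
    case True
    then have "ms * k2 = 1" using e4 by simp
    moreover have "ms * 1 \<le> ms * k2" using ms1 k2 by (intro mult_left_mono) auto
    ultimately show ?thesis using True by simp
  next
    case False
    then have mm1: "1 \<le> mm" using mm0 by simp
    have k22: "2 \<le> k2" using k2 k2one False by (cases "k2 = 1") auto
    have "ms * 2 \<le> ms * k2" using ms1 k22 by (intro mult_left_mono) auto
    moreover have "0 \<le> mm * (k1 - 2)" using mm0 k12 by simp
    ultimately have "2 * ms \<le> 2 * ((k1 - 1) * mm + 1)"
      using e4 by (simp add: algebra_simps)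
    then show ?thesis by simp
  qed
qed

lemma core_hard:
  fixes a b q r i z k1 k2 hh :: int
  assumes a2: "2 \<le> a" and bq: "b = q * a + r" and r0: "0 \<le> r" and ra: "r < a" and q1: "1 \<le> q"
    and z0: "0 \<le> z" and iz: "i + z \<le> hh + 1" and hh: "q + a - 2 \<le> hh"
    and k1: "1 \<le> k1" and k2: "1 \<le> k2" and k1b: "k1 * b \<le> i * a + z"
    and ub: "i * a + z < (k1 + k2) * b"
    and Lz: "z < (k2 * r) mod a"
    and det: "(a - (k1 * r) mod a) * k2 + ((k2 * r) mod a) * k1 = a"
  shows "\<exists>c1 c2 c3. 0 \<le> c1 \<and> 0 \<le> c2 \<and> 0 \<le> c3 \<and> c1 + c2 + c3 \<le> hh \<and>
    i * a + z - b = c3 * b + c2 * a + c1"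
proof -
  have a0: "0 < a" using a2 by simp
  define H where "H = (k1 * r) mod a"
  define L where "L = (k2 * r) mod a"
  define g where "g = a - H"
  define ms where "ms = (k1 * r) div a + 1"
  define mm where "mm = (k2 * r) div a"
  have H0: "0 \<le> H" "H < a" using a0 by (auto simp: H_def)
  have L0: "0 \<le> L" "L < a" using a0 by (auto simp: L_def)
  have g1: "1 \<le> g" "g \<le> a" using H0 by (auto simp: g_def)
  have L1: "1 \<le> L" using Lz z0 by (simp add: L_def)
  have E1: "ms * a = k1 * r + g"
  proof -
    have "(k1 * r) div a * a + H = k1 * r" by (simp add: H_def)
    then show ?thesis by (simp add: ms_def g_def algebra_simps)
  qed
  have E2: "mm * a = k2 * r - L"
  proof -
    have "(k2 * r) div a * a + L = k2 * r" by (simp add: L_def)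
    then show ?thesis by (simp add: mm_def algebra_simps)
  qed
  have E3: "g * k2 + L * k1 = a" using det by (simp add: g_def H_def L_def)
  have E4: "ms * k2 = 1 + mm * k1"
  proof -
    have "a * (ms * k2 - mm * k1) = (ms * a) * k2 - (mm * a) * k1" by (simp add: algebra_simps)
    also have "\<dots> = g * k2 + L * k1" by (simp only: E1 E2) (simp add: algebra_simps)
    also have "\<dots> = a * 1" using E3 by simp
    finally have "ms * k2 - mm * k1 = 1" using a0 by simp
    then show ?thesis by simp
  qed
  have ms1: "1 \<le> ms" using a0 k1 r0 by (simp add: ms_def pos_imp_zdiv_nonneg_iff)
  have mm0: "0 \<le> mm" using a0 k2 r0 by (simp add: mm_def pos_imp_zdiv_nonneg_iff)
  have gk2: "g * 1 \<le> g * k2" using g1 k2 by (intro mult_left_mono) auto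
  have Lk1: "L * 1 \<le> L * k1" using L1 k1 by (intro mult_left_mono) auto
  have gL: "g + L \<le> a" using E3 gk2 Lk1 by simp
  define c3 where "c3 = k1 - 1"
  define c2 where "c2 = i - k1 * q - ms"
  define c1 where "c1 = z + g"
  have val2: "i * a + z - k1 * b = c2 * a + c1"
    unfolding c2_def c1_def bq using E1 by (simp add: algebra_simps)
  have val: "c3 * b + c2 * a + c1 = i * a + z - b"
    using val2 unfolding c3_def by (simp add: algebra_simps)
  have c1a: "c1 < a" using Lz gL by (simp add: c1_def L_def)
  have c20: "0 \<le> c2"
  proof (rule ccontr)
    assume "\<not> 0 \<le> c2"
    then have "c2 \<le> -1" by simp
    then have "c2 * a \<le> -1 * a" using a0 by (intro mult_right_mono) auto
    then show False using val2 k1b c1a by simp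
  qed
  have c10: "0 \<le> c1" using z0 g1 by (simp add: c1_def)
  have cnt: "c1 + c2 + c3 \<le> hh"
  proof (cases "g \<le> k1 * (q - 1) + ms")
    case True
    have "k1 * (q - 1) = k1 * q - k1" by (simp add: algebra_simps)
    then show ?thesis using True iz unfolding c1_def c2_def c3_def by linarith
  next
    case False
    then have nA: "k1 * (q - 1) + ms + 1 \<le> g" by simp
    have msb: "ms \<le> (k1 - 1) * mm + 1"
    proof (rule ms_bound[OF k1 k2 E4 ms1 mm0])
      assume "k1 = 1"
      then have "ms = r div a + 1" by (simp add: ms_def)
      then show "ms = 1" using r0 ra by simp
    next
      assume "k2 = 1"
      then show "mm = 0" using r0 ra by (simp add: mm_def)
    qed
    have p1: "(k1 * (q - 1) + ms + 1) * (k2 - 1) \<le> g * (k2 - 1)"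
      using nA k2 by (intro mult_right_mono) auto
    have p2: "0 \<le> (k2 - 1) * (k1 - 1) * (q - 1)" using k1 k2 q1 by simp
    have p3: "(k1 - 1) * mm \<le> (k1 - 1) * (mm + L - 1)" using k1 L1 by (intro mult_left_mono) auto
    have B: "g + L + k1 + (k2 - 1) * q + mm \<le> a + 1"
    proof -
      have "a + 1 - (g + L + k1 + (k2 - 1) * q + mm)
          = g * (k2 - 1) + L * (k1 - 1) + 1 - k1 - (k2 - 1) * q - mm"
        using E3 by (simp add: algebra_simps)
      also have "\<dots> \<ge> (k1 * (q - 1) + ms + 1) * (k2 - 1) + L * (k1 - 1) + 1 - k1 - (k2 - 1) * q - mm"
        using p1 by simp
      also have "(k1 * (q - 1) + ms + 1) * (k2 - 1) + L * (k1 - 1) + 1 - k1 - (k2 - 1) * q - mm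
          = (k2 - 1) * (k1 - 1) * (q - 1) + (k1 - 1) * (mm + L - 1) + 1 - ms"
        using E4 by (simp add: algebra_simps)
      finally show ?thesis using p2 p3 msb by linarith
    qed
    define N where "N = (k1 + k2) * q + ms + mm"
    have ubN: "(i - N) * a < L - g - z"
    proof -
      have "(k1 + k2) * b = N * a + L - g"
        unfolding N_def bq using E1 E2 by (simp add: algebra_simps)
      then show ?thesis using ub by (simp add: algebra_simps)
    qed
    have iN: "i \<le> N"
    proof (rule ccontr)
      assume "\<not> i \<le> N"
      then have "1 \<le> i - N" by simp
      then have "1 * a \<le> (i - N) * a" using a0 by (intro mult_right_mono) auto
      then have "a \<le> (i - N) * a" by simp
      then show False using ubN L0 g1 z0 by linarith
    qed
    have Bq: "(k2 - 1) * q = k2 * q - q" by (simp add: algebra_simps)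
    have Nq: "N = k1 * q + k2 * q + ms + mm" by (simp add: N_def algebra_simps)
    show ?thesis
    proof (cases "i = N")
      case True
      then have "z \<le> L - g - 1" using ubN by simp
      then show ?thesis using B Bq Nq True hh g1 unfolding c1_def c2_def c3_def by linarith
    next
      case False
      then have "i \<le> N - 1" using iN by simp
      moreover have "z \<le> L - 1" using Lz by (simp add: L_def)
      ultimately show ?thesis using B Bq Nq hh unfolding c1_def c2_def c3_def by linarith
    qed
  qed
  show ?thesis using c10 c20 k1 cnt val
    by (intro exI[of _ c1] exI[of _ c2] exI[of _ c3]) (auto simp: c3_def)
qed

lemma Zlem:
  fixes a b y :: int and h :: nat
  assumes a1: "1 < a" and ab: "a < b" and hq: "b div a + a - 2 \<le> int h"
    and rep: "hrep a b (Suc h) y" and yb: "b \<le> y"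
  shows "hrep a b h (y - b)"
proof -
  obtain c1 c2 c3 :: int where c: "0 \<le> c1" "0 \<le> c2" "0 \<le> c3" "c1 + c2 + c3 \<le> int (Suc h)"
    "y = c3 * b + c2 * a + c1" using hrep_E[OF rep] by blast
  show ?thesis
  proof (cases "1 \<le> c3")
    case True
    show ?thesis by (rule hrep_intI[of c1 c2 "c3 - 1"]) (use c True in \<open>auto simp: algebra_simps\<close>)
  next
    case False
    then have c30: "c3 = 0" using c by simp
    have a0: "0 < a" using a1 by simp
    define q where "q = b div a"
    define r where "r = b mod a"
    have bq: "b = q * a + r" by (simp add: q_def r_def)
    have r0: "0 \<le> r" "r < a" using a0 by (auto simp: r_def)
    have q1: "1 \<le> q"
    proof -
      have "a div a \<le> b div a" using ab a0 by (intro zdiv_mono1) auto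
      then show ?thesis using a0 by (simp add: q_def)
    qed
    define i where "i = c2 + c1 div a"
    define z where "z = c1 mod a"
    have yiz: "y = i * a + z" unfolding i_def z_def using c c30 by (simp add: algebra_simps)
    have z0: "0 \<le> z" "z < a" using a0 by (auto simp: z_def)
    have dz: "c1 div a + c1 mod a \<le> c1"
    proof -
      have "c1 div a * 1 \<le> c1 div a * a" using a0 c
        by (intro mult_left_mono) (auto simp: pos_imp_zdiv_nonneg_iff)
      moreover have "c1 div a * a + c1 mod a = c1" by simp
      ultimately show ?thesis by linarith
    qed
    have iz: "i + z \<le> int h + 1" using c c30 dz unfolding i_def z_def by simp
    have hh: "q + a - 2 \<le> int h" using hq by (simp add: q_def)
    have b0: "0 < b" using a0 ab by simp
    define K where "K = nat (y div b)"
    have ydb: "1 \<le> y div b"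
    proof -
      have "b div b \<le> y div b" using yb b0 by (intro zdiv_mono1) auto
      then show ?thesis using b0 by simp
    qed
    have K1: "1 \<le> K" using ydb by (simp add: K_def)
    have Kb: "int K * b \<le> y"
    proof -
      have "int K = y div b" using ydb by (simp add: K_def)
      moreover have "y div b * b \<le> y"
      proof -
        have "y div b * b + y mod b = y" by simp
        moreover have "0 \<le> y mod b" using b0 by simp
        ultimately show ?thesis by linarith
      qed
      ultimately show ?thesis by simp
    qed
    have Kb2: "y < (int K + 1) * b"
    proof -
      have "int K = y div b" using ydb by (simp add: K_def)
      moreover have "y < (y div b + 1) * b"
      proof -
        have e: "y div b * b + y mod b = y" by simp
        have "y mod b < b" using b0 by simp
        moreover have "(y div b + 1) * b = y div b * b + b" by (simp add: algebra_simps)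
        ultimately show ?thesis using e by linarith
      qed
      ultimately show ?thesis by simp
    qed
    have kbmono: "int k * b \<le> y" if "k \<le> K" for k :: nat
    proof -
      have "int k * b \<le> int K * b" using that b0 by (intro mult_right_mono) auto
      then show ?thesis using Kb by simp
    qed
    have ex: "\<exists>c1 c2 c3. 0 \<le> c1 \<and> 0 \<le> c2 \<and> 0 \<le> c3 \<and> c1 + c2 + c3 \<le> int h \<and>
        i * a + z - b = c3 * b + c2 * a + c1"
    proof (cases "\<exists>k::nat. 1 \<le> k \<and> k \<le> K \<and> (int k * r) mod a \<le> z")
      case True
      then obtain k :: nat where k: "1 \<le> k" "k \<le> K" "(int k * r) mod a \<le> z" by blast
      show ?thesis
        by (rule core_easy[OF a0 bq r0(1) q1 z0 iz]) (use k kbmono[OF k(2)] yiz in auto)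
    next
      case False
      then have hard: "\<forall>k::nat. 1 \<le> k \<and> k \<le> K \<longrightarrow> z < (int k * r) mod a" by auto
      then have nz: "\<forall>k::nat. 1 \<le> k \<and> k \<le> K \<longrightarrow> (int k * r) mod a \<noteq> 0" using z0 by fastforce
      obtain k1 k2 :: nat where kk: "1 \<le> k1" "k1 \<le> K" "1 \<le> k2" "k2 \<le> K" "K < k1 + k2"
        and det: "(a - (int k1 * r) mod a) * int k2 + ((int k2 * r) mod a) * int k1 = a"
        using phase[OF a0 K1 nz] by blast
      have ub: "y < (int k1 + int k2) * b"
      proof -
        have "(int K + 1) * b \<le> (int k1 + int k2) * b" using kk b0 by (intro mult_right_mono) auto
        then show ?thesis using Kb2 by simp
      qed
      show ?thesis
        by (rule core_hard[OF _ bq r0 q1 z0(1) iz hh, of "int k1" "int k2"])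
          (use a1 kk kbmono[OF kk(2)] ub yiz hard det in auto)
    qed
    then obtain d1 d2 d3 where d: "0 \<le> d1" "0 \<le> d2" "0 \<le> d3" "d1 + d2 + d3 \<le> int h"
      "i * a + z - b = d3 * b + d2 * a + d1" by blast
    show ?thesis by (rule hrep_intI[of d1 d2 d3]) (use d yiz in auto)
  qed
qed

lemma hrep_bound:
  fixes a2 a3 x :: int
  assumes "1 \<le> a2" "a2 \<le> a3" "hrep a2 a3 h x"
  shows "x \<le> int h * a3"
proof -
  obtain c1 c2 c3 :: int where c: "0 \<le> c1" "0 \<le> c2" "0 \<le> c3" "c1 + c2 + c3 \<le> int h"
    "x = c3 * a3 + c2 * a2 + c1" using hrep_E[OF assms(3)] by blast
  have "c2 * a2 \<le> c2 * a3" using c assms by (intro mult_left_mono) auto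
  moreover have "c1 * 1 \<le> c1 * a3" using c assms by (intro mult_left_mono) auto
  moreover have "(c1 + c2 + c3) * a3 \<le> int h * a3" using c assms by (intro mult_right_mono) auto
  ultimately show ?thesis using c by (simp add: algebra_simps)
qed

lemma Xh_props:
  fixes a2 a3 :: int and h :: nat
  assumes "1 < a2" "a2 < a3"
  shows "0 \<le> Xh a2 a3 h \<and> (\<forall>n. 0 < n \<and> n \<le> Xh a2 a3 h \<longrightarrow> hrep a2 a3 h n)
    \<and> \<not> hrep a2 a3 h (Xh a2 a3 h + 1)"
proof -
  define P where "P = (\<lambda>n::int. n > 0 \<and> \<not> hrep a2 a3 h n)"
  have a30: "0 \<le> a3" using assms by simp
  have ex: "P (int h * a3 + 1)"
    using hrep_bound[of a2 a3 h "int h * a3 + 1"] assms a30 by (auto simp: P_def)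
  define m where "m = (LEAST m::nat. P (int m))"
  have exn: "P (int (nat (int h * a3 + 1)))" using ex a30 by simp
  have Pm: "P (int m)" unfolding m_def by (rule LeastI[of "\<lambda>m. P (int m)", OF exn])
  have minm: "m \<le> m'" if "P (int m')" for m' unfolding m_def by (rule Least_le) (rule that)
  have least: "(LEAST n. P n) = int m"
  proof (rule Least_equality)
    show "P (int m)" by (rule Pm)
  next
    fix y assume Py: "P y"
    then have "y > 0" by (simp add: P_def)
    then have "P (int (nat y))" using Py by simp
    then have "m \<le> nat y" by (rule minm)
    then show "int m \<le> y" using \<open>y > 0\<close> by linarith
  qed
  have X: "Xh a2 a3 h = int m - 1" unfolding Xh_def using least by (simp add: P_def)
  show ?thesis
  proof (intro conjI allI impI)
    show "0 \<le> Xh a2 a3 h" using Pm X by (simp add: P_def)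
  next
    fix n assume n: "0 < n \<and> n \<le> Xh a2 a3 h"
    show "hrep a2 a3 h n"
    proof (rule ccontr)
      assume "\<not> hrep a2 a3 h n"
      then have "P n" using n by (simp add: P_def)
      then have "P (int (nat n))" using n by simp
      then have "m \<le> nat n" by (rule minm)
      then have "int m \<le> n" using n by linarith
      then show False using n X by simp
    qed
  next
    show "\<not> hrep a2 a3 h (Xh a2 a3 h + 1)" using Pm X by (simp add: P_def)
  qed
qed

lemma Xh_eqI:
  fixes N :: int
  assumes "0 \<le> N" "\<forall>n. 0 < n \<and> n \<le> N \<longrightarrow> hrep a2 a3 h n" "\<not> hrep a2 a3 h (N + 1)"
  shows "Xh a2 a3 h = N"
proof -
  have "(LEAST n::int. n > 0 \<and> \<not> hrep a2 a3 h n) = N + 1"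
  proof (rule Least_equality)
    show "N + 1 > 0 \<and> \<not> hrep a2 a3 h (N + 1)" using assms by simp
  next
    fix y assume y: "y > 0 \<and> \<not> hrep a2 a3 h y"
    show "N + 1 \<le> y"
    proof (rule ccontr)
      assume "\<not> N + 1 \<le> y"
      then show False using assms(2) y by auto
    qed
  qed
  then show ?thesis unfolding Xh_def by simp
qed

lemma low_cost:
  fixes a b :: int
  assumes a1: "1 < a" and ab: "a < b" and rep: "hrep a b h (b div a * a - 1)"
  shows "b div a + a - 2 \<le> int h"
proof -
  define q where "q = b div a"
  have a0: "0 < a" using a1 by simp
  have qa: "q * a \<le> b"
  proof -
    have "b div a * a + b mod a = b" by (rule div_mult_mod_eq)
    moreover have "0 \<le> b mod a" using a0 by simp
    ultimately show ?thesis unfolding q_def by linarith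
  qed
  obtain c1 c2 c3 :: int where c: "0 \<le> c1" "0 \<le> c2" "0 \<le> c3" "c1 + c2 + c3 \<le> int h"
    "q * a - 1 = c3 * b + c2 * a + c1" using hrep_E[OF rep] unfolding q_def by blast
  have c30: "c3 = 0"
  proof (rule ccontr)
    assume "c3 \<noteq> 0"
    then have "1 \<le> c3" using c by simp
    then have "1 * b \<le> c3 * b" using ab a0 by (intro mult_right_mono) auto
    moreover have "0 \<le> c2 * a" using c a0 by simp
    ultimately show False using c qa by simp
  qed
  have c2q: "c2 \<le> q - 1"
  proof (rule ccontr)
    assume "\<not> c2 \<le> q - 1"
    then have "q \<le> c2" by simp
    then have "q * a \<le> c2 * a" using a0 by (intro mult_right_mono) auto
    then show False using c c30 by simp
  qed
  have "0 \<le> (q - 1 - c2) * (a - 1)" using c2q a1 by simp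
  moreover have "(q - 1 - c2) * (a - 1) = c1 + c2 - (q + a - 2)"
    using c c30 by (simp add: algebra_simps)
  ultimately show ?thesis using c c30 by (simp add: q_def)
qed

lemma step_X:
  fixes a2 a3 :: int and h :: nat
  assumes a1: "1 < a2" and ab: "a2 < a3" and hq: "a3 div a2 + a2 - 2 \<le> int h"
    and Xb: "a3 \<le> Xh a2 a3 h"
  shows "Xh a2 a3 (Suc h) = Xh a2 a3 h + a3"
proof -
  define X where "X = Xh a2 a3 h"
  have XP: "0 \<le> X" "\<forall>n. 0 < n \<and> n \<le> X \<longrightarrow> hrep a2 a3 h n" "\<not> hrep a2 a3 h (X + 1)"
    using Xh_props[OF a1 ab, of h] by (auto simp: X_def)
  show ?thesis unfolding X_def[symmetric]
  proof (rule Xh_eqI)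
    show "0 \<le> X + a3" using XP ab a1 by simp
  next
    show "\<forall>n. 0 < n \<and> n \<le> X + a3 \<longrightarrow> hrep a2 a3 (Suc h) n"
    proof (intro allI impI)
      fix n assume n: "0 < n \<and> n \<le> X + a3"
      show "hrep a2 a3 (Suc h) n"
      proof (cases "n \<le> X")
        case True
        then show ?thesis using XP n hrep_mono[of a2 a3 h n "Suc h"] by auto
      next
        case False
        then have "0 < n - a3 \<and> n - a3 \<le> X" using n Xb X_def by simp
        then have "hrep a2 a3 h (n - a3)" using XP by simp
        then show ?thesis using hrep_add_b[of a2 a3 h "n - a3"] by simp
      qed
    qed
  next
    show "\<not> hrep a2 a3 (Suc h) (X + a3 + 1)"
    proof
      assume "hrep a2 a3 (Suc h) (X + a3 + 1)"
      then have "hrep a2 a3 h (X + a3 + 1 - a3)"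
        by (rule Zlem[OF a1 ab hq]) (use XP in simp)
      then show False using XP by simp
    qed
  qed
qed

theorem mainTheorem8:
  fixes a2 a3 :: int
  assumes "1 < a2" and "a2 < a3"
  shows "(\<exists>h. P1 a2 a3 h) \<and> (\<exists>h. P2 a2 a3 h) \<and> h2 a2 a3 \<le> h0 a2 a3"
proof -
  note a1 = assms(1) and ab = assms(2)
  have ex0: "\<exists>h. Xh a2 a3 h \<ge> a3"
  proof (rule exI[of _ "nat a3"], rule ccontr)
    assume "\<not> a3 \<le> Xh a2 a3 (nat a3)"
    moreover have XP: "0 \<le> Xh a2 a3 (nat a3)" "\<not> hrep a2 a3 (nat a3) (Xh a2 a3 (nat a3) + 1)"
      using Xh_props[OF a1 ab, of "nat a3"] by auto
    moreover have "hrep a2 a3 (nat a3) (Xh a2 a3 (nat a3) + 1)"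
      by (rule hrep_ones) (use calculation ab a1 in auto)
    ultimately show False by simp
  qed
  define H0 where "H0 = h0 a2 a3"
  have XH0: "a3 \<le> Xh a2 a3 H0" unfolding H0_def h0_def by (rule LeastI_ex[OF ex0])
  have H0q: "a3 div a2 + a2 - 2 \<le> int H0"
  proof (rule low_cost[OF a1 ab])
    have XP: "\<forall>n. 0 < n \<and> n \<le> Xh a2 a3 H0 \<longrightarrow> hrep a2 a3 H0 n"
      using Xh_props[OF a1 ab, of H0] by auto
    have q1: "1 \<le> a3 div a2"
    proof -
      have "a2 div a2 \<le> a3 div a2" using ab a1 by (intro zdiv_mono1) auto
      then show ?thesis using a1 by simp
    qed
    have "a2 \<le> a3 div a2 * a2" using q1 a1 by (simp add: mult_le_cancel_right1)
    moreover have "a3 div a2 * a2 \<le> a3"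
    proof -
      have "a3 div a2 * a2 + a3 mod a2 = a3" by (rule div_mult_mod_eq)
      moreover have "0 \<le> a3 mod a2" using a1 by simp
      ultimately show ?thesis by linarith
    qed
    ultimately have "0 < a3 div a2 * a2 - 1 \<and> a3 div a2 * a2 - 1 \<le> Xh a2 a3 H0"
      using XH0 a1 by linarith
    then show "hrep a2 a3 H0 (a3 div a2 * a2 - 1)" using XP by blast
  qed
  have inv: "a3 \<le> Xh a2 a3 (H0 + n) \<and> Xh a2 a3 (Suc (H0 + n)) = Xh a2 a3 (H0 + n) + a3" for n
  proof (induction n)
    case 0
    show ?case using XH0 step_X[OF a1 ab H0q XH0] by simp
  next
    case (Suc n)
    have X1: "a3 \<le> Xh a2 a3 (H0 + Suc n)" using Suc ab a1 by simp
    have hq: "a3 div a2 + a2 - 2 \<le> int (H0 + Suc n)" using H0q by simp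
    show ?case using X1 step_X[OF a1 ab hq X1] by simp
  qed
  have inv2: "a3 \<le> Xh a2 a3 h \<and> Xh a2 a3 (Suc h) = Xh a2 a3 h + a3" if "H0 \<le> h" for h
    using inv[of "h - H0"] that by simp
  have P1H0: "P1 a2 a3 H0" unfolding P1_def using inv2 by simp
  have h1H0: "h1 a2 a3 \<le> H0" unfolding h1_def by (rule Least_le) (rule P1H0)
  have P2H0: "P2 a2 a3 H0"
    unfolding P2_def
  proof (intro conjI allI impI)
    show "h1 a2 a3 \<le> H0" by (rule h1H0)
  next
    fix h' x assume h': "H0 \<le> h'" and x: "Xh a2 a3 h' < x \<and> x < int h' * a3"
    have hq: "a3 div a2 + a2 - 2 \<le> int h'" using H0q h' by simp
    have X0: "0 \<le> Xh a2 a3 h'" using Xh_props[OF a1 ab, of h'] by simp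
    show "(\<not> hrep a2 a3 h' x) = (\<not> hrep a2 a3 (h' + 1) (x + a3))"
    proof
      assume "\<not> hrep a2 a3 h' x"
      then show "\<not> hrep a2 a3 (h' + 1) (x + a3)"
        using Zlem[OF a1 ab hq, of "x + a3"] x X0 by auto
    next
      assume "\<not> hrep a2 a3 (h' + 1) (x + a3)"
      then show "\<not> hrep a2 a3 h' x" using hrep_add_b[of a2 a3 h' x] by auto
    qed
  qed
  have "h2 a2 a3 \<le> H0" unfolding h2_def by (rule Least_le) (rule P2H0)
  then show ?thesis using P1H0 P2H0 unfolding H0_def by blast
qed

end
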